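(* Let $n\ge2$, $1\le r\le n-1$ and $\alpha,\beta,\gamma\in\mathbb{Z}_2^n$. Then (1) $\mathrm{adp}^{\mathrm{XR}}_r(\alpha,\beta\to\gamma)=\mathrm{adp}^{\mathrm{XR}}_r(\beta,\alpha\to\gamma)$; (2) $\mathrm{adp}^{\mathrm{XR}}_r(\alpha,\beta\to\gamma)=\mathrm{adp}^{\mathrm{XR}}_r(\alpha+2^{n-1},\beta+2^{n-1}\to\gamma)$; (3) $\mathrm{adp}^{\mathrm{XR}}_r(\alpha,\beta\to\gamma)=\mathrm{adp}^{\mathrm{XR}}_r(\pm\alpha,\pm\beta\to\pm\gamma)$ for every independent choice of the signs (each $\pm x$ means either $x$ or $-x$).
   Context: For $x\in\mathbb{Z}_2^n$ write $x=(x_0,\dots,x_{n-1})$ and identify $x$ with the integer $\sum_{i=0}^{n-1}x_i2^{n-1-i}$ ($x_0$ most significant); $x+y$, $x-y$, $-x$ are computed modulo $2^n$. $\oplus$ is bitwise XOR and $x\lll r=(x_r,\dots,x_{n-1},x_0,\dots,x_{r-1})$. For $f:(\mathbb{Z}_2^n)^k\to\mathbb{Z}_2^n$, $\mathrm{adp}^f(\alpha_1,\dots,\alpha_k\to\alpha_{k+1})=2^{-kn}\#\{(x_1,\dots,x_k): f(x_1+\alpha_1,\dots,x_k+\alpha_k)=f(x_1,\dots,x_k)+\alpha_{k+1}\}$. $\mathrm{adp}^{\mathrm{XR}}_r$ denotes $\mathrm{adp}^f$ for $f(x,y)=(x\oplus y)\lll r$. *)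

theory Defs
  imports Complex_Main
begin

text \<open>Elements of Z_2^n are represented by their integer value x in {0..<2^n},
  where x = (x_0,...,x_{n-1}) with x_0 the most significant bit.\<close>

definition to_bits :: "nat \<Rightarrow> nat \<Rightarrow> nat \<Rightarrow> bool" where
  "to_bits n x i = bit x (n - 1 - i)"

definition from_bits :: "nat \<Rightarrow> (nat \<Rightarrow> bool) \<Rightarrow> nat" where
  "from_bits n v = (\<Sum>i<n. of_bool (v i) * 2 ^ (n - 1 - i))"

definition addn :: "nat \<Rightarrow> nat \<Rightarrow> nat \<Rightarrow> nat" where
  "addn n x y = (x + y) mod 2 ^ n"

definition negn :: "nat \<Rightarrow> nat \<Rightarrow> nat" where
  "negn n x = (2 ^ n - x mod 2 ^ n) mod 2 ^ n"

definition rotl :: "nat \<Rightarrow> nat \<Rightarrow> nat \<Rightarrow> nat" where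
  "rotl n r x = from_bits n (\<lambda>i. to_bits n x ((i + r) mod n))"

definition adp2 :: "nat \<Rightarrow> (nat \<Rightarrow> nat \<Rightarrow> nat) \<Rightarrow> nat \<Rightarrow> nat \<Rightarrow> nat \<Rightarrow> real" where
  "adp2 n f a b g =
     real (card {(x, y). x < 2 ^ n \<and> y < 2 ^ n \<and>
                  f (addn n x a) (addn n y b) = addn n (f x y) g}) / 2 ^ (2 * n)"

definition XR :: "nat \<Rightarrow> nat \<Rightarrow> nat \<Rightarrow> nat \<Rightarrow> nat" where
  "XR n r x y = rotl n r (xor x y)"

definition adpXR :: "nat \<Rightarrow> nat \<Rightarrow> nat \<Rightarrow> nat \<Rightarrow> nat \<Rightarrow> real" where
  "adpXR n r a b g = adp2 n (XR n r) a b g"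

definition pm :: "nat \<Rightarrow> bool \<Rightarrow> nat \<Rightarrow> nat" where
  "pm n s x = (if s then x else negn n x)"

end

theory Submission
  imports Defs
begin


lemma bit_lt: "(x::nat) < 2^n \<Longrightarrow> bit x k \<Longrightarrow> k < n"
  by (metis bit_take_bit_iff take_bit_nat_eq_self_iff)

lemma comp_xor: "(x::nat) < 2^n \<Longrightarrow> xor x (2^n - 1) = 2^n - 1 - x"
proof -
  assume x: "x < 2^n"
  have "and (xor x (mask n)) x = 0"
    by (rule bit_eqI) (use bit_lt[OF x] in \<open>auto simp: bit_simps\<close>)
  hence "xor x (mask n) + x = or (xor x (mask n)) x" by (rule disjunctive_add_eq_or)
  also have "\<dots> = mask n"
    by (rule bit_eqI) (use bit_lt[OF x] in \<open>auto simp: bit_simps\<close>)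
  finally show ?thesis by (simp add: mask_eq_exp_minus_1)
qed

lemma top_xor:
  assumes n: "n \<ge> 1" and z: "(z::nat) < 2^n"
  shows "(z + 2^(n-1)) mod 2^n = xor z (2^(n-1))"
proof -
  define h :: nat where "h = 2^(n-1)"
  have N: "(2::nat)^n = 2*h" using n by (simp add: h_def power_Suc[symmetric])
  define w where "w = take_bit (n-1) z"
  have wl: "w < h" unfolding w_def h_def by simp
  have "z = take_bit (Suc (n-1)) z" using z n by (metis Suc_diff_1 less_le_trans take_bit_nat_eq_self_iff zero_less_one)
  hence zd: "z = h * of_bool (bit z (n-1)) + w" unfolding w_def h_def by (metis take_bit_Suc_from_most)
  have dj: "and w h = 0" unfolding w_def h_def by (rule bit_eqI) (auto simp: bit_simps)
  have hw: "xor w h = w + h" using disjunctive_add_eq_xor[OF dj] by simp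
  show ?thesis
  proof (cases "bit z (n-1)")
    case True
    hence "z = w + h" using zd by simp
    hence "xor z h = w" using hw by (metis xor.assoc xor_self_eq xor.right_neutral)  
    moreover have "(z + h) mod (2*h) = w"
    proof -
      have e: "z + h = w + 2*h" using `z = w + h` by simp
      have "(z + h) mod (2*h) = (w + 2*h) mod (2*h)" by (simp only: e)
      also have "\<dots> = w mod (2*h)" by (rule mod_add_self2)
      also have "\<dots> = w" using wl by simp
      finally show ?thesis .
    qed
    ultimately show ?thesis using N h_def by simp
  next
    case False
    hence "z = w" using zd by simp
    thus ?thesis using hw N wl h_def by simp
  qed
qed

lemma sum_pow_rev: "(\<Sum>i<n. (2::nat) ^ (n - 1 - i)) + 1 = 2 ^ n"
proof (induction n)
  case 0 show ?case by simp
next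
  case (Suc n)
  have "(\<Sum>i<Suc n. (2::nat) ^ (Suc n - 1 - i)) = 2^n + (\<Sum>i<n. 2 ^ (n - 1 - i))"
    by (subst sum.lessThan_Suc_shift) simp
  then show ?case using Suc by simp
qed

lemma from_bits_not: "from_bits n v + from_bits n (\<lambda>i. \<not> v i) + 1 = 2 ^ n"
proof -
  have "from_bits n v + from_bits n (\<lambda>i. \<not> v i) = (\<Sum>i<n. (2::nat) ^ (n - 1 - i))"
    unfolding from_bits_def sum.distrib[symmetric] by (rule sum.cong) auto
  thus ?thesis using sum_pow_rev[of n] by simp
qed

lemma from_bits_lt: "from_bits n v < 2 ^ n"
  using from_bits_not[of n v] by simp

lemma rotl_lt: "rotl n r z < 2 ^ n"
  unfolding rotl_def by (rule from_bits_lt)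

lemma bit_m1: "bit ((2::nat)^n - 1) k \<longleftrightarrow> k < n"
  using bit_mask_iff[of n k, where 'a=nat] by (simp add: mask_eq_exp_minus_1 del: One_nat_def)

lemma rotl_compl:
  assumes "n \<ge> 1"
  shows "rotl n r (xor z (2^n - 1)) = 2^n - 1 - rotl n r z"
proof -
  have "to_bits n (xor z (2^n - 1)) ((i + r) mod n) = (\<not> to_bits n z ((i + r) mod n))" for i
    using assms by (simp add: to_bits_def bit_xor_iff bit_m1 del: One_nat_def)
  hence "rotl n r (xor z (2^n - 1)) = from_bits n (\<lambda>i. \<not> to_bits n z ((i + r) mod n))"
    unfolding rotl_def by simp
  thus ?thesis using from_bits_not[of n "\<lambda>i. to_bits n z ((i + r) mod n)"]
    unfolding rotl_def by simp
qed



lemma addn_lt[simp]: "addn n x a < 2^n" by (simp add: addn_def)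
lemma negn_lt[simp]: "negn n x < 2^n" by (simp add: negn_def)
lemma int_addn: "int (addn n x a) = (int x + int a) mod 2^n"
  by (simp add: addn_def zmod_int)
lemma int_negn: "int (negn n a) = (- int a) mod 2^n"
proof -
  have "int (negn n a) = (2^n - int (a mod 2^n)) mod 2^n"
    by (simp add: negn_def zmod_int of_nat_diff less_imp_le)
  also have "\<dots> = (- int a) mod 2^n" by (simp add: zmod_int mod_simps)
  finally show ?thesis .
qed
lemma int_comp: "y < 2^n \<Longrightarrow> int (2^n - 1 - y) = 2^n - 1 - int y"
  by (simp add: of_nat_diff)
lemma int_comp': "y < 2^n \<Longrightarrow> int (2^n - Suc y) = 2^n - 1 - int y"
  by (simp add: of_nat_diff)
lemma eqI_mod: "(u::nat) < 2^n \<Longrightarrow> v < 2^n \<Longrightarrow> int u mod 2^n = int v mod 2^n \<Longrightarrow> u = v"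
  by (metis mod_less of_nat_eq_iff zmod_int of_nat_numeral of_nat_power)
lemma eq_iff_mod: "(u::nat) < 2^n \<Longrightarrow> v < 2^n \<Longrightarrow> u = v \<longleftrightarrow> int u mod 2^n = int v mod 2^n"
  using eqI_mod by blast

lemma negn_negn: "c < 2^n \<Longrightarrow> negn n (negn n c) = c"
  by (rule eqI_mod[of _ n]) (simp_all add: int_negn mod_simps)

lemma M1: "x < 2^n \<Longrightarrow> addn n (2^n - 1 - x) a = 2^n - 1 - addn n x (negn n a)"
  apply (rule eqI_mod[of _ n])
    apply simp
   apply simp
  apply (simp add: int_addn int_negn int_comp int_comp' mod_simps)
  apply (rule arg_cong[where f="\<lambda>t. t mod 2^n"])
  apply simp
  done

lemma M6: "x < 2^n \<Longrightarrow> addn n (addn n x a) (negn n a) = x"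
  by (rule eqI_mod[of _ n]) (simp_all add: int_addn int_negn mod_simps)

lemma M3: "x < 2^n \<Longrightarrow> addn n (2^n - 1 - addn n x a) a = 2^n - 1 - x"
  using M1[OF addn_lt[of n x a], of a] M6[of x n a] by simp

lemma M5: "A < 2^n \<Longrightarrow> B < 2^n \<Longrightarrow> (A = addn n B c) \<longleftrightarrow> (B = addn n A (negn n c))"
proof -
  assume a: "A < 2^n" "B < 2^n"
  define N :: int where "N = 2^n"
  have e1: "(A = addn n B c) \<longleftrightarrow> int A mod N = (int B + int c) mod N"
    using eq_iff_mod[OF a(1) addn_lt[of n B c]] by (simp add: int_addn N_def)
  have e2: "(B = addn n A (negn n c)) \<longleftrightarrow> int B mod N = (int A + (- int c)) mod N"
    using eq_iff_mod[OF a(2) addn_lt[of n A "negn n c"]] by (simp add: int_addn int_negn N_def mod_simps)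
  have "(int A mod N = (int B + int c) mod N) \<longleftrightarrow> (int B mod N = (int A + (- int c)) mod N)"
  proof -
    have "int B - (int A + - int c) = - (int A - (int B + int c))" by simp
    thus ?thesis unfolding mod_eq_dvd_iff by (simp only: dvd_minus_iff)
  qed
  thus ?thesis using e1 e2 by simp
qed


definition T :: "nat \<Rightarrow> nat \<Rightarrow> nat \<Rightarrow> nat \<Rightarrow> nat \<Rightarrow> (nat \<times> nat) set" where
  "T n r a b c = {(x, y). x < 2 ^ n \<and> y < 2 ^ n \<and>
      XR n r (addn n x a) (addn n y b) = addn n (XR n r x y) c}"

lemma adp_T: "adpXR n r a b c = real (card (T n r a b c)) / 2 ^ (2 * n)"
  by (simp add: adpXR_def adp2_def T_def)

lemma T_fin: "finite (T n r a b c)"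
proof -
  have "T n r a b c \<subseteq> {..<2^n} \<times> {..<2^n}" by (auto simp: T_def)
  thus ?thesis by (rule finite_subset) simp
qed

lemma XR_sym: "XR n r x y = XR n r y x"
  by (simp add: XR_def xor.commute)

lemma XR_lt[simp]: "XR n r x y < 2^n"
  by (simp add: XR_def rotl_lt)

lemma XRc1: "n \<ge> 1 \<Longrightarrow> x < 2^n \<Longrightarrow> XR n r (2^n - 1 - x) y = 2^n - 1 - XR n r x y"
proof -
  assume n: "n \<ge> 1" and x: "x < 2^n"
  have "XR n r (2^n - 1 - x) y = rotl n r (xor (xor x (2^n - 1)) y)"
    by (simp only: XR_def comp_xor[OF x, symmetric])
  also have "xor (xor x (2^n - 1)) y = xor (xor x y) (2^n - 1)"
    by (metis xor.assoc xor.commute)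
  finally show ?thesis using rotl_compl[OF n] by (simp add: XR_def)
qed

lemma XRc2: "n \<ge> 1 \<Longrightarrow> x < 2^n \<Longrightarrow> y < 2^n \<Longrightarrow> XR n r (2^n - 1 - x) (2^n - 1 - y) = XR n r x y"
proof -
  assume n: "n \<ge> 1" and x: "x < 2^n" and y: "y < 2^n"
  have "xor (xor x (2^n - 1)) (xor y (2^n - 1)) = xor x (y::nat)"
    by (metis xor.assoc xor.commute xor.left_commute xor_self_eq xor.right_neutral)
  thus ?thesis by (simp add: XR_def comp_xor[OF x] comp_xor[OF y] del: One_nat_def)
qed

lemma XRh: "XR n r (xor x h) (xor y h) = XR n r x y"
proof -
  have "xor (xor x h) (xor y h) = xor x (y::nat)"
    by (metis xor.assoc xor.commute xor.left_commute xor_self_eq xor.right_neutral)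
  thus ?thesis by (simp add: XR_def)
qed

lemma part1: "card (T n r a b c) = card (T n r b a c)"
proof -
  have "prod.swap ` T n r a b c = T n r b a c"
    by (auto simp: T_def XR_sym image_iff)
  moreover have "card (prod.swap ` T n r a b c) = card (T n r a b c)"
    by (rule card_image) simp
  ultimately show ?thesis by simp
qed

lemma addn_assoc: "addn n x (addn n a h) = addn n (addn n x a) h"
  by (simp add: addn_def mod_simps add.assoc)

lemma part2:
  assumes n: "n \<ge> 1"
  shows "T n r (addn n a (2^(n-1))) (addn n b (2^(n-1))) c = T n r a b c"
proof -
  have e: "addn n x (addn n a (2^(n-1))) = xor (addn n x a) (2^(n-1))" for x a
  proof -
    have "addn n (addn n x a) (2^(n-1)) = xor (addn n x a) (2^(n-1))"
      by (unfold addn_def[of n "addn n x a"]) (rule top_xor[OF n addn_lt])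
    thus ?thesis by (simp only: addn_assoc)
  qed
  show ?thesis unfolding T_def e XRh by (rule refl)
qed

lemma comp_lt: "(2::nat)^n - 1 - k < 2^n"
  by (simp add: less_imp_diff_less)

lemma comp_inj: "(p::nat) < 2^n \<Longrightarrow> q < 2^n \<Longrightarrow> 2^n - 1 - p = 2^n - 1 - q \<Longrightarrow> p = q"
  by arith

lemma KA_le:
  assumes n: "n \<ge> 1"
  shows "card (T n r a b c) \<le> card (T n r a b (negn n c))"
proof -
  define f where "f = (\<lambda>(x, y). (2^n - 1 - addn n x a, 2^n - 1 - addn n y b))"
  have sub: "f ` T n r a b c \<subseteq> T n r a b (negn n c)"
  proof
    fix p assume "p \<in> f ` T n r a b c"
    then obtain x y where p: "p = f (x, y)" and xy: "(x, y) \<in> T n r a b c" by auto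
    have x: "x < 2^n" and y: "y < 2^n" and h: "XR n r (addn n x a) (addn n y b) = addn n (XR n r x y) c"
      using xy by (auto simp: T_def)
    define u where "u = 2^n - 1 - addn n x a"
    define v where "v = 2^n - 1 - addn n y b"
    have u: "u < 2^n" and v: "v < 2^n" unfolding u_def v_def by (rule comp_lt)+
    have ua: "addn n u a = 2^n - 1 - x" unfolding u_def by (rule M3[OF x])
    have vb: "addn n v b = 2^n - 1 - y" unfolding v_def by (rule M3[OF y])
    have e1: "XR n r (addn n u a) (addn n v b) = XR n r x y"
      unfolding ua vb by (rule XRc2[OF n x y])
    have e2: "XR n r u v = addn n (XR n r x y) c"
      unfolding u_def v_def XRc2[OF n addn_lt addn_lt] by (rule h)
    have e3: "XR n r x y = addn n (XR n r u v) (negn n c)"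
      using M5[of "XR n r u v" n "XR n r x y" c] e2 by simp
    have "p = (u, v)" using p unfolding f_def u_def v_def by simp
    thus "p \<in> T n r a b (negn n c)" using u v e1 e3 unfolding T_def by simp
  qed
  moreover have inj: "inj_on f (T n r a b c)"
  proof (rule inj_onI)
    fix p q assume p: "p \<in> T n r a b c" and q: "q \<in> T n r a b c" and e: "f p = f q"
    obtain x y where pp: "p = (x, y)" by (cases p)
    obtain x' y' where qq: "q = (x', y')" by (cases q)
    have lt: "x < 2^n" "y < 2^n" "x' < 2^n" "y' < 2^n" using p q unfolding pp qq by (auto simp: T_def)
    have c1: "2^n - 1 - addn n x a = 2^n - 1 - addn n x' a" and c2: "2^n - 1 - addn n y b = 2^n - 1 - addn n y' b"
      using e unfolding pp qq f_def by simp_all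
    have d1: "addn n x a = addn n x' a" by (rule comp_inj[OF addn_lt addn_lt c1])
    have d2: "addn n y b = addn n y' b" by (rule comp_inj[OF addn_lt addn_lt c2])
    have "x = x'" using M6[OF lt(1), of a] M6[OF lt(3), of a] d1 by metis
    moreover have "y = y'" using M6[OF lt(2), of b] M6[OF lt(4), of b] d2 by metis
    ultimately show "p = q" using pp qq by simp
  qed
  ultimately show ?thesis by (intro card_inj_on_le[OF inj sub T_fin])
qed

lemma KA:
  assumes "n \<ge> 1" "c < 2^n"
  shows "card (T n r a b c) = card (T n r a b (negn n c))"
  using KA_le[OF assms(1), of r a b c] KA_le[OF assms(1), of r a b "negn n c"]
    negn_negn[OF assms(2)] by simp

lemma KB_le:
  assumes n: "n \<ge> 1" and a: "a < 2^n" and c: "c < 2^n"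
  shows "card (T n r a b c) \<le> card (T n r (negn n a) b (negn n c))"
proof -
  define f where "f = (\<lambda>(x::nat, y::nat). (2^n - 1 - x, y))"
  have sub: "f ` T n r a b c \<subseteq> T n r (negn n a) b (negn n c)"
  proof
    fix p assume "p \<in> f ` T n r a b c"
    then obtain x y where p: "p = f (x, y)" and xy: "(x, y) \<in> T n r a b c" by auto
    have x: "x < 2^n" and y: "y < 2^n" and h: "XR n r (addn n x a) (addn n y b) = addn n (XR n r x y) c"
      using xy by (auto simp: T_def)
    have u: "2^n - 1 - x < 2^n" by (rule comp_lt)
    have ua: "addn n (2^n - 1 - x) (negn n a) = 2^n - 1 - addn n x a"
      using M1[OF x, of "negn n a"] negn_negn[OF a] by simp
    have e1: "XR n r (addn n (2^n - 1 - x) (negn n a)) (addn n y b) = 2^n - 1 - addn n (XR n r x y) c"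
      unfolding ua XRc1[OF n addn_lt] h by (rule refl)
    have e2: "addn n (XR n r (2^n - 1 - x) y) (negn n c) = 2^n - 1 - addn n (XR n r x y) c"
      unfolding XRc1[OF n x] M1[OF XR_lt] negn_negn[OF c] by (rule refl)
    have "p = (2^n - 1 - x, y)" using p unfolding f_def by simp
    thus "p \<in> T n r (negn n a) b (negn n c)" using u y e1 e2 unfolding T_def by simp
  qed
  moreover have inj: "inj_on f (T n r a b c)"
  proof (rule inj_onI)
    fix p q assume p: "p \<in> T n r a b c" and q: "q \<in> T n r a b c" and e: "f p = f q"
    obtain x y where pp: "p = (x, y)" by (cases p)
    obtain x' y' where qq: "q = (x', y')" by (cases q)
    have lt: "x < 2^n" "x' < 2^n" using p q unfolding pp qq by (auto simp: T_def)
    have c1: "2^n - 1 - x = 2^n - 1 - x'" and "y = y'"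
      using e unfolding pp qq f_def by simp_all
    moreover have "x = x'" by (rule comp_inj[OF lt c1])
    ultimately show "p = q" using pp qq by simp
  qed
  ultimately show ?thesis by (intro card_inj_on_le[OF inj sub T_fin])
qed

lemma KB:
  assumes "n \<ge> 1" "a < 2^n" "c < 2^n"
  shows "card (T n r a b c) = card (T n r (negn n a) b (negn n c))"
proof -
  have 1: "card (T n r a b c) \<le> card (T n r (negn n a) b (negn n c))" by (rule KB_le[OF assms])
  have 2: "card (T n r (negn n a) b (negn n c)) \<le> card (T n r (negn n (negn n a)) b (negn n (negn n c)))"
    by (rule KB_le[OF assms(1) negn_lt negn_lt])
  show ?thesis using 1 2 negn_negn[OF assms(2)] negn_negn[OF assms(3)] by simp
qed

lemma KC:
  assumes "n \<ge> 1" "b < 2^n" "c < 2^n"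
  shows "card (T n r a b c) = card (T n r a (negn n b) (negn n c))"
proof -
  have "card (T n r b a c) = card (T n r (negn n b) a (negn n c))" by (rule KB[OF assms])
  thus ?thesis using part1[of n r a b c] part1[of n r a "negn n b" "negn n c"] by simp
qed

theorem theorem5:
  fixes n r \<alpha> \<beta> \<gamma> :: nat
  assumes "n \<ge> 2" and "1 \<le> r" and "r \<le> n - 1"
    and "\<alpha> < 2 ^ n" and "\<beta> < 2 ^ n" and "\<gamma> < 2 ^ n"
  shows "adpXR n r \<alpha> \<beta> \<gamma> = adpXR n r \<beta> \<alpha> \<gamma>
    \<and> adpXR n r \<alpha> \<beta> \<gamma> = adpXR n r (addn n \<alpha> (2 ^ (n - 1))) (addn n \<beta> (2 ^ (n - 1))) \<gamma>
    \<and> (\<forall>s1 s2 s3. adpXR n r \<alpha> \<beta> \<gamma> = adpXR n r (pm n s1 \<alpha>) (pm n s2 \<beta>) (pm n s3 \<gamma>))"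
proof (intro conjI allI)
  have n: "n \<ge> 1" using assms(1) by simp
  note a = assms(4) and b = assms(5) and c = assms(6)
  show "adpXR n r \<alpha> \<beta> \<gamma> = adpXR n r \<beta> \<alpha> \<gamma>"
    unfolding adp_T using part1 by simp
  show "adpXR n r \<alpha> \<beta> \<gamma> = adpXR n r (addn n \<alpha> (2 ^ (n - 1))) (addn n \<beta> (2 ^ (n - 1))) \<gamma>"
    unfolding adp_T part2[OF n] by (rule refl)
  fix s1 s2 s3
  define K where "K = (\<lambda>a b c. card (T n r a b c))"
  have KA': "K a' b' c' = K a' b' (negn n c')" if "c' < 2^n" for a' b' c'
    unfolding K_def using KA[OF n that] by simp
  have KB': "K a' b' c' = K (negn n a') b' (negn n c')" if "a' < 2^n" "c' < 2^n" for a' b' c'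
    unfolding K_def using KB[OF n that] by simp
  have KC': "K a' b' c' = K a' (negn n b') (negn n c')" if "b' < 2^n" "c' < 2^n" for a' b' c'
    unfolding K_def using KC[OF n that] by simp
  have step1: "\<exists>c'. (c' = \<gamma> \<or> c' = negn n \<gamma>) \<and> K \<alpha> \<beta> \<gamma> = K (pm n s1 \<alpha>) (pm n s2 \<beta>) c'"
  proof (cases s1; cases s2)
    assume "s1" "s2" thus ?thesis by (auto simp: pm_def)
  next
    assume "s1" "\<not> s2" thus ?thesis using KC'[OF b c] by (auto simp: pm_def)
  next
    assume "\<not> s1" "s2" thus ?thesis using KB'[OF a c] by (auto simp: pm_def)
  next
    assume "\<not> s1" "\<not> s2"
    have "K \<alpha> \<beta> \<gamma> = K (negn n \<alpha>) \<beta> (negn n \<gamma>)" by (rule KB'[OF a c])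
    also have "\<dots> = K (negn n \<alpha>) (negn n \<beta>) (negn n (negn n \<gamma>))" by (rule KC'[OF b negn_lt])
    finally have "K \<alpha> \<beta> \<gamma> = K (negn n \<alpha>) (negn n \<beta>) (negn n (negn n \<gamma>))" .
    thus ?thesis using \<open>\<not> s1\<close> \<open>\<not> s2\<close> negn_negn[OF c] by (auto simp: pm_def)
  qed
  then obtain c' where c': "c' = \<gamma> \<or> c' = negn n \<gamma>" and e: "K \<alpha> \<beta> \<gamma> = K (pm n s1 \<alpha>) (pm n s2 \<beta>) c'"
    by blast
  have "K (pm n s1 \<alpha>) (pm n s2 \<beta>) c' = K (pm n s1 \<alpha>) (pm n s2 \<beta>) (pm n s3 \<gamma>)"
  proof (cases s3)
    case True
    show ?thesis using c' True KA'[OF c] by (auto simp: pm_def)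
  next
    case False
    show ?thesis using c' False KA'[OF c] by (auto simp: pm_def)
  qed
  hence "K \<alpha> \<beta> \<gamma> = K (pm n s1 \<alpha>) (pm n s2 \<beta>) (pm n s3 \<gamma>)" using e by simp
  thus "adpXR n r \<alpha> \<beta> \<gamma> = adpXR n r (pm n s1 \<alpha>) (pm n s2 \<beta>) (pm n s3 \<gamma>)"
    unfolding adp_T K_def by simp
qed

end
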